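(* For every series-parallel rational expression $e$ there exists a pomset automaton $A$ that is well-nested and finitely supported and has a state $q_e$ such that $L_A(q_e)=[\![e]\!]$.
   Context: Fix a finite alphabet $\Sigma$. A pomset is an isomorphism class of labelled posets $\langle C, \leq, \lambda\rangle$ with $\lambda: C \to \Sigma$; $1$ is the empty pomset and $a\in\Sigma$ the one-point pomset labelled $a$. Sequential composition $U\cdot V$ puts the two (disjoint) pomsets side by side with every element of $U$ below every element of $V$; parallel composition $U\parallel V$ is the disjoint union without extra order. $\mathsf{Pom}^{\mathsf{sp}}$ is the smallest set of pomsets containing $1$ and all $a\in\Sigma$, closed under $\cdot$ and $\parallel$. For pomset languages, $\mathcal U\cdot\mathcal V$ and $\mathcal U\parallel\mathcal V$ are pointwise, $\mathcal U^*=\bigcup_n\mathcal U^n$, $\mathcal U^\dagger=\bigcup_n\mathcal U^{(n)}$ with $\mathcal U^0=\mathcal U^{(0)}=\{1\}$, $\mathcal U^{n+1}=\mathcal U\cdot\mathcal U^n$, $\mathcal U^{(n+1)}=\mathcal U\parallel\mathcal U^{(n)}$. Spr-expressions: $e,f ::= 0 \mid 1 \mid a\in\Sigma \mid e+f \mid e\cdot f \mid e\parallel f \mid e^* \mid e^\dagger$, with $[\![0]\!]=\emptyset$, $[\![1]\!]=\{1\}$, $[\![a]\!]=\{a\}$, and $+,\cdot,\parallel,{}^*,{}^\dagger$ interpreted as union and the language operations above. A PA is $A=\langle Q,\delta,\gamma,F\rangle$ with $F\subseteq Q$, $\delta:Q\times\Sigma\to Q$, $\gamma:Q^3\to Q$,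 containing states $\bot\notin F$, $\top\in F$ with $\delta(\bot,a)=\delta(\top,a)=\bot$, $\gamma(\bot,r,s)=\gamma(\top,r,s)=\bot$. Traces: the smallest relation with $q\xrightarrow{1}_A q$; $q\xrightarrow{a}_A\delta(q,a)$; $q\xrightarrow{U}_A q''\xrightarrow{V}_A q'$ implies $q\xrightarrow{U\cdot V}_A q'$; $r\xrightarrow{U}_A r'\in F$ and $s\xrightarrow{V}_A s'\in F$ imply $q\xrightarrow{U\parallel V}_A\gamma(q,r,s)$. $L_A(q)=\{U:\exists q'\in F.\ q\xrightarrow{U}_A q'\}$. $\preceq_A$ is the smallest preorder on $Q$ with $r,s\preceq_A q$ when $\gamma(q,r,s)\neq\bot$, $\delta(q,a)\preceq_A q$, and $\gamma(q,r,s)\preceq_A q$; $q\prec_A q'$ iff $q\preceq_A q'$ and $q'\not\preceq_A q$. $\pi_A(q)$ is the smallest $\preceq_A$-downward-closed set containing $q$; $A$ is finitely supported if all $\pi_A(q)$ are finite. A state $q$ is sequential if $\gamma(q,r,s)\neq\bot$ implies $r,s\prec_A q$; $q\in F$ is recursive if it is not sequential, $\delta(q,a)=\bot$ for all $a$, and $\gamma(q,r,s)\neq\bot$ implies $s=q$, $r\prec_A q$, $\gamma(q,r,s)=\top$. $A$ is well-nested if each state is sequential or recursive. *)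

theory Defs
  imports Main
begin

text \<open>A labelled poset with carrier drawn from nat: (carrier, order, labelling).
  The labelling is irrelevant outside the carrier.\<close>
type_synonym 'a lposet = "nat set \<times> (nat \<times> nat) set \<times> (nat \<Rightarrow> 'a)"

definition lp_carrier :: "'a lposet \<Rightarrow> nat set" where
  "lp_carrier X = fst X"
definition lp_order :: "'a lposet \<Rightarrow> (nat \<times> nat) set" where
  "lp_order X = fst (snd X)"
definition lp_label :: "'a lposet \<Rightarrow> nat \<Rightarrow> 'a" where
  "lp_label X = snd (snd X)"

definition wf_lp :: "'a lposet \<Rightarrow> bool" where
  "wf_lp X \<longleftrightarrow> finite (lp_carrier X)
     \<and> lp_order X \<subseteq> lp_carrier X \<times> lp_carrier X
     \<and> (\<forall>x\<in>lp_carrier X. (x, x) \<in> lp_order X)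
     \<and> (\<forall>x y. (x, y) \<in> lp_order X \<and> (y, x) \<in> lp_order X \<longrightarrow> x = y)
     \<and> trans (lp_order X)"

definition lp_iso :: "'a lposet \<Rightarrow> 'a lposet \<Rightarrow> bool" where
  "lp_iso X Y \<longleftrightarrow> (\<exists>f. bij_betw f (lp_carrier X) (lp_carrier Y)
     \<and> (\<forall>x\<in>lp_carrier X. \<forall>y\<in>lp_carrier X.
          (x, y) \<in> lp_order X \<longleftrightarrow> (f x, f y) \<in> lp_order Y)
     \<and> (\<forall>x\<in>lp_carrier X. lp_label Y (f x) = lp_label X x))"

definition lp_empty :: "'a lposet" where
  "lp_empty = ({}, {}, (\<lambda>_. undefined))"

definition lp_atom :: "'a \<Rightarrow> 'a lposet" where
  "lp_atom a = ({0}, {(0, 0)}, (\<lambda>_. a))"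

text \<open>Disjoint union: left copy on even numbers, right copy on odd numbers.\<close>
definition lp_par :: "'a lposet \<Rightarrow> 'a lposet \<Rightarrow> 'a lposet" where
  "lp_par X Y =
     ((\<lambda>n. 2 * n) ` lp_carrier X \<union> (\<lambda>n. 2 * n + 1) ` lp_carrier Y,
      (\<lambda>(x, y). (2 * x, 2 * y)) ` lp_order X \<union> (\<lambda>(x, y). (2 * x + 1, 2 * y + 1)) ` lp_order Y,
      (\<lambda>n. if even n then lp_label X (n div 2) else lp_label Y (n div 2)))"

definition lp_seq :: "'a lposet \<Rightarrow> 'a lposet \<Rightarrow> 'a lposet" where
  "lp_seq X Y =
     (lp_carrier (lp_par X Y),
      lp_order (lp_par X Y) \<union> {(2 * x, 2 * y + 1) | x y. x \<in> lp_carrier X \<and> y \<in> lp_carrier Y},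
      lp_label (lp_par X Y))"

text \<open>Pomsets: isomorphism classes of (finite) labelled posets.\<close>
typedef 'a pomset = "{C :: 'a lposet set. \<exists>X. wf_lp X \<and> C = {Y. wf_lp Y \<and> lp_iso X Y}}"
proof -
  have "wf_lp (({}, {}, \<lambda>_. undefined) :: 'a lposet)"
    by (simp add: wf_lp_def lp_carrier_def lp_order_def trans_def)
  then show ?thesis by blast
qed

definition pom :: "'a lposet \<Rightarrow> 'a pomset" where
  "pom X = Abs_pomset {Y. wf_lp Y \<and> lp_iso X Y}"

definition pom_rep :: "'a pomset \<Rightarrow> 'a lposet" where
  "pom_rep P = (SOME X. X \<in> Rep_pomset P)"

definition pom_one :: "'a pomset" where
  "pom_one = pom lp_empty"

definition pom_atom :: "'a \<Rightarrow> 'a pomset" where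
  "pom_atom a = pom (lp_atom a)"

definition pom_seq :: "'a pomset \<Rightarrow> 'a pomset \<Rightarrow> 'a pomset" where
  "pom_seq U V = pom (lp_seq (pom_rep U) (pom_rep V))"

definition pom_par :: "'a pomset \<Rightarrow> 'a pomset \<Rightarrow> 'a pomset" where
  "pom_par U V = pom (lp_par (pom_rep U) (pom_rep V))"

definition lang_seq :: "'a pomset set \<Rightarrow> 'a pomset set \<Rightarrow> 'a pomset set" where
  "lang_seq L M = {pom_seq U V | U V. U \<in> L \<and> V \<in> M}"

definition lang_par :: "'a pomset set \<Rightarrow> 'a pomset set \<Rightarrow> 'a pomset set" where
  "lang_par L M = {pom_par U V | U V. U \<in> L \<and> V \<in> M}"

primrec lang_seq_pow :: "'a pomset set \<Rightarrow> nat \<Rightarrow> 'a pomset set" where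
  "lang_seq_pow L 0 = {pom_one}"
| "lang_seq_pow L (Suc n) = lang_seq L (lang_seq_pow L n)"

primrec lang_par_pow :: "'a pomset set \<Rightarrow> nat \<Rightarrow> 'a pomset set" where
  "lang_par_pow L 0 = {pom_one}"
| "lang_par_pow L (Suc n) = lang_par L (lang_par_pow L n)"

definition lang_star :: "'a pomset set \<Rightarrow> 'a pomset set" where
  "lang_star L = (\<Union>n. lang_seq_pow L n)"

definition lang_dagger :: "'a pomset set \<Rightarrow> 'a pomset set" where
  "lang_dagger L = (\<Union>n. lang_par_pow L n)"

datatype 'a spr = Zero | One | Atom 'a | Plus "'a spr" "'a spr" | Seq "'a spr" "'a spr"
  | Par "'a spr" "'a spr" | Star "'a spr" | Dagger "'a spr"

primrec sem :: "'a spr \<Rightarrow> 'a pomset set" where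
  "sem Zero = {}"
| "sem One = {pom_one}"
| "sem (Atom a) = {pom_atom a}"
| "sem (Plus e f) = sem e \<union> sem f"
| "sem (Seq e f) = lang_seq (sem e) (sem f)"
| "sem (Par e f) = lang_par (sem e) (sem f)"
| "sem (Star e) = lang_star (sem e)"
| "sem (Dagger e) = lang_dagger (sem e)"

record ('q, 'a) pa =
  states :: "'q set"
  delta :: "'q \<Rightarrow> 'a \<Rightarrow> 'q"
  gamma :: "'q \<Rightarrow> 'q \<Rightarrow> 'q \<Rightarrow> 'q"
  final :: "'q set"
  bot :: 'q
  top :: 'q

definition is_pa :: "('q, 'a) pa \<Rightarrow> bool" where
  "is_pa A \<longleftrightarrow> final A \<subseteq> states A
     \<and> bot A \<in> states A \<and> top A \<in> states A
     \<and> bot A \<notin> final A \<and> top A \<in> final A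
     \<and> (\<forall>q\<in>states A. \<forall>a. delta A q a \<in> states A)
     \<and> (\<forall>q\<in>states A. \<forall>r\<in>states A. \<forall>s\<in>states A. gamma A q r s \<in> states A)
     \<and> (\<forall>a. delta A (bot A) a = bot A \<and> delta A (top A) a = bot A)
     \<and> (\<forall>r\<in>states A. \<forall>s\<in>states A.
          gamma A (bot A) r s = bot A \<and> gamma A (top A) r s = bot A)"

inductive trace :: "('q, 'a) pa \<Rightarrow> 'q \<Rightarrow> 'a pomset \<Rightarrow> 'q \<Rightarrow> bool" for A where
  tr_one: "q \<in> states A \<Longrightarrow> trace A q pom_one q"
| tr_atom: "q \<in> states A \<Longrightarrow> trace A q (pom_atom a) (delta A q a)"
| tr_seq: "trace A q U q'' \<Longrightarrow> trace A q'' V q' \<Longrightarrow> trace A q (pom_seq U V) q'"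
| tr_par: "q \<in> states A \<Longrightarrow> trace A r U r' \<Longrightarrow> r' \<in> final A \<Longrightarrow>
           trace A s V s' \<Longrightarrow> s' \<in> final A \<Longrightarrow> trace A q (pom_par U V) (gamma A q r s)"

definition lang :: "('q, 'a) pa \<Rightarrow> 'q \<Rightarrow> 'a pomset set" where
  "lang A q = {U. \<exists>q'\<in>final A. trace A q U q'}"

inductive pa_le :: "('q, 'a) pa \<Rightarrow> 'q \<Rightarrow> 'q \<Rightarrow> bool" for A where
  le_refl: "q \<in> states A \<Longrightarrow> pa_le A q q"
| le_trans: "pa_le A p q \<Longrightarrow> pa_le A q r \<Longrightarrow> pa_le A p r"
| le_gamma_l: "q \<in> states A \<Longrightarrow> r \<in> states A \<Longrightarrow> s \<in> states A \<Longrightarrow>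
               gamma A q r s \<noteq> bot A \<Longrightarrow> pa_le A r q"
| le_gamma_r: "q \<in> states A \<Longrightarrow> r \<in> states A \<Longrightarrow> s \<in> states A \<Longrightarrow>
               gamma A q r s \<noteq> bot A \<Longrightarrow> pa_le A s q"
| le_delta: "q \<in> states A \<Longrightarrow> pa_le A (delta A q a) q"
| le_gamma: "q \<in> states A \<Longrightarrow> r \<in> states A \<Longrightarrow> s \<in> states A \<Longrightarrow>
             pa_le A (gamma A q r s) q"

definition pa_lt :: "('q, 'a) pa \<Rightarrow> 'q \<Rightarrow> 'q \<Rightarrow> bool" where
  "pa_lt A q q' \<longleftrightarrow> pa_le A q q' \<and> \<not> pa_le A q' q"

definition support :: "('q, 'a) pa \<Rightarrow> 'q \<Rightarrow> 'q set" where
  "support A q = \<Inter>{S. S \<subseteq> states A \<and> q \<in> S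
                        \<and> (\<forall>p\<in>S. \<forall>p'\<in>states A. pa_le A p' p \<longrightarrow> p' \<in> S)}"

definition finitely_supported :: "('q, 'a) pa \<Rightarrow> bool" where
  "finitely_supported A \<longleftrightarrow> (\<forall>q\<in>states A. finite (support A q))"

definition sequential_state :: "('q, 'a) pa \<Rightarrow> 'q \<Rightarrow> bool" where
  "sequential_state A q \<longleftrightarrow> (\<forall>r\<in>states A. \<forall>s\<in>states A.
     gamma A q r s \<noteq> bot A \<longrightarrow> pa_lt A r q \<and> pa_lt A s q)"

definition recursive_state :: "('q, 'a) pa \<Rightarrow> 'q \<Rightarrow> bool" where
  "recursive_state A q \<longleftrightarrow> q \<in> final A \<and> \<not> sequential_state A q
     \<and> (\<forall>a. delta A q a = bot A)
     \<and> (\<forall>r\<in>states A. \<forall>s\<in>states A. gamma A q r s \<noteq> bot A \<longrightarrow>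
          s = q \<and> pa_lt A r q \<and> gamma A q r s = top A)"

definition well_nested :: "('q, 'a) pa \<Rightarrow> bool" where
  "well_nested A \<longleftrightarrow> (\<forall>q\<in>states A. sequential_state A q \<or> recursive_state A q)"

end

theory Submission
  imports Defs "HOL-Library.Countable"
begin


lemma lp_simps[simp]:
  "lp_carrier (c, r, l) = c" "lp_order (c, r, l) = r" "lp_label (c, r, l) = l"
  by (simp_all add: lp_carrier_def lp_order_def lp_label_def)

lemma lp_par_simps[simp]:
  "lp_carrier (lp_par X Y) = (\<lambda>n. 2 * n) ` lp_carrier X \<union> (\<lambda>n. 2 * n + 1) ` lp_carrier Y"
  "lp_order (lp_par X Y) = (\<lambda>(x, y). (2 * x, 2 * y)) ` lp_order X \<union> (\<lambda>(x, y). (2 * x + 1, 2 * y + 1)) ` lp_order Y"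
  "lp_label (lp_par X Y) = (\<lambda>n. if even n then lp_label X (n div 2) else lp_label Y (n div 2))"
  by (simp_all add: lp_par_def)

lemma lp_seq_simps[simp]:
  "lp_carrier (lp_seq X Y) = (\<lambda>n. 2 * n) ` lp_carrier X \<union> (\<lambda>n. 2 * n + 1) ` lp_carrier Y"
  "lp_order (lp_seq X Y) = (\<lambda>(x, y). (2 * x, 2 * y)) ` lp_order X \<union> (\<lambda>(x, y). (2 * x + 1, 2 * y + 1)) ` lp_order Y
      \<union> {(2 * x, 2 * y + 1) | x y. x \<in> lp_carrier X \<and> y \<in> lp_carrier Y}"
  "lp_label (lp_seq X Y) = (\<lambda>n. if even n then lp_label X (n div 2) else lp_label Y (n div 2))"
  by (simp_all add: lp_seq_def)

lemma lp_empty_simps[simp]: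
  "lp_carrier lp_empty = {}" "lp_order lp_empty = {}"
  by (simp_all add: lp_empty_def)

lemma iso_refl: "lp_iso X X"
  unfolding lp_iso_def by (rule exI[of _ id]) auto

lemma iso_sym: assumes "lp_iso X Y" shows "lp_iso Y X"
proof -
  obtain f where b: "bij_betw f (lp_carrier X) (lp_carrier Y)"
    and o: "\<forall>x\<in>lp_carrier X. \<forall>y\<in>lp_carrier X. (x, y) \<in> lp_order X \<longleftrightarrow> (f x, f y) \<in> lp_order Y"
    and l: "\<forall>x\<in>lp_carrier X. lp_label Y (f x) = lp_label X x"
    using assms unfolding lp_iso_def by blast
  let ?g = "inv_into (lp_carrier X) f"
  have b': "bij_betw ?g (lp_carrier Y) (lp_carrier X)" using b by (rule bij_betw_inv_into)
  have fg: "\<And>y. y \<in> lp_carrier Y \<Longrightarrow> f (?g y) = y" using b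
    by (meson bij_betw_inv_into_right)
  have gm: "\<And>y. y \<in> lp_carrier Y \<Longrightarrow> ?g y \<in> lp_carrier X" using b'
    by (meson bij_betwE)
  show ?thesis unfolding lp_iso_def
  proof (intro exI[of _ ?g] conjI ballI)
    show "bij_betw ?g (lp_carrier Y) (lp_carrier X)" by (rule b')
  next
    fix x y assume x: "x \<in> lp_carrier Y" and y: "y \<in> lp_carrier Y"
    show "((x, y) \<in> lp_order Y) = ((?g x, ?g y) \<in> lp_order X)"
      using o gm[OF x] gm[OF y] fg[OF x] fg[OF y] by metis
  next
    fix x assume x: "x \<in> lp_carrier Y"
    show "lp_label X (?g x) = lp_label Y x"
      using l gm[OF x] fg[OF x] by metis
  qed
qed

lemma iso_trans: assumes "lp_iso X Y" "lp_iso Y Z" shows "lp_iso X Z"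
proof -
  obtain f where b: "bij_betw f (lp_carrier X) (lp_carrier Y)"
    and o: "\<forall>x\<in>lp_carrier X. \<forall>y\<in>lp_carrier X. (x, y) \<in> lp_order X \<longleftrightarrow> (f x, f y) \<in> lp_order Y"
    and l: "\<forall>x\<in>lp_carrier X. lp_label Y (f x) = lp_label X x"
    using assms(1) unfolding lp_iso_def by blast
  obtain g where b2: "bij_betw g (lp_carrier Y) (lp_carrier Z)"
    and o2: "\<forall>x\<in>lp_carrier Y. \<forall>y\<in>lp_carrier Y. (x, y) \<in> lp_order Y \<longleftrightarrow> (g x, g y) \<in> lp_order Z"
    and l2: "\<forall>x\<in>lp_carrier Y. lp_label Z (g x) = lp_label Y x"
    using assms(2) unfolding lp_iso_def by blast
  have m: "\<And>x. x \<in> lp_carrier X \<Longrightarrow> f x \<in> lp_carrier Y" using b by (meson bij_betwE)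
  show ?thesis unfolding lp_iso_def
  proof (intro exI[of _ "g \<circ> f"] conjI ballI)
    show "bij_betw (g \<circ> f) (lp_carrier X) (lp_carrier Z)" using bij_betw_trans[OF b b2] .
  next
    fix x y assume x: "x \<in> lp_carrier X" and y: "y \<in> lp_carrier X"
    show "((x, y) \<in> lp_order X) = (((g \<circ> f) x, (g \<circ> f) y) \<in> lp_order Z)"
      using o o2 m[OF x] m[OF y] x y by simp
  next
    fix x assume x: "x \<in> lp_carrier X"
    show "lp_label Z ((g \<circ> f) x) = lp_label X x" using l l2 m[OF x] x by simp
  qed
qed

lemma iso_map:
  assumes "inj_on f (lp_carrier X)" "lp_order X \<subseteq> lp_carrier X \<times> lp_carrier X"
    "lp_carrier Y = f ` lp_carrier X" "lp_order Y = map_prod f f ` lp_order X"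
    "\<forall>x\<in>lp_carrier X. lp_label Y (f x) = lp_label X x"
  shows "lp_iso X Y"
  unfolding lp_iso_def
proof (intro exI[of _ f] conjI)
  show "bij_betw f (lp_carrier X) (lp_carrier Y)" using assms by (simp add: bij_betw_def)
  show "\<forall>x\<in>lp_carrier X. \<forall>y\<in>lp_carrier X. ((x, y) \<in> lp_order X) = ((f x, f y) \<in> lp_order Y)"
  proof (intro ballI iffI)
    fix x y assume x: "x \<in> lp_carrier X" and y: "y \<in> lp_carrier X"
    { assume "(x, y) \<in> lp_order X" then show "(f x, f y) \<in> lp_order Y"
        using assms(4) by force }
    { assume "(f x, f y) \<in> lp_order Y"
      then obtain a b where ab: "(a, b) \<in> lp_order X" "f a = f x" "f b = f y" using assms(4) by auto
      then have "a \<in> lp_carrier X" "b \<in> lp_carrier X" using assms(2) by auto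
      then have "a = x" "b = y" using ab x y assms(1) unfolding inj_on_def by metis+
      then show "(x, y) \<in> lp_order X" using ab by simp }
  qed
  show "\<forall>x\<in>lp_carrier X. lp_label Y (f x) = lp_label X x" using assms(5) .
qed

lemma wf_empty: "wf_lp lp_empty"
  by (simp add: wf_lp_def trans_def)

lemma two_neq[simp]: "(2 * (x::nat) = 2 * y + 1) = False" "(2 * (x::nat) + 1 = 2 * y) = False"
  "(2 * (x::nat) = Suc (2 * y)) = False" "(Suc (2 * (x::nat)) = 2 * y) = False"
  by presburger+

lemma wf_par: assumes X: "wf_lp X" and Y: "wf_lp Y" shows "wf_lp (lp_par X Y)"
  unfolding wf_lp_def
proof (intro conjI)
  show "finite (lp_carrier (lp_par X Y))" using X Y by (simp add: wf_lp_def)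
  show "lp_order (lp_par X Y) \<subseteq> lp_carrier (lp_par X Y) \<times> lp_carrier (lp_par X Y)"
    using X Y unfolding wf_lp_def by auto
  show "\<forall>x\<in>lp_carrier (lp_par X Y). (x, x) \<in> lp_order (lp_par X Y)"
    using X Y unfolding wf_lp_def by auto
  show "\<forall>x y. (x, y) \<in> lp_order (lp_par X Y) \<and> (y, x) \<in> lp_order (lp_par X Y) \<longrightarrow> x = y"
    using X Y unfolding wf_lp_def by auto
  show "trans (lp_order (lp_par X Y))"
  proof (rule transI)
    fix a b c assume ab: "(a, b) \<in> lp_order (lp_par X Y)" and bc: "(b, c) \<in> lp_order (lp_par X Y)"
    have tX: "trans (lp_order X)" and tY: "trans (lp_order Y)" using X Y by (simp_all add: wf_lp_def)
    from ab bc show "(a, c) \<in> lp_order (lp_par X Y)"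
      apply simp
      apply (elim disjE imageE; clarsimp)
      using tX tY by (auto dest: transD)
  qed
qed

lemma wf_seq: assumes X: "wf_lp X" and Y: "wf_lp Y" shows "wf_lp (lp_seq X Y)"
  unfolding wf_lp_def
proof (intro conjI)
  show "finite (lp_carrier (lp_seq X Y))" using X Y by (simp add: wf_lp_def)
  show "lp_order (lp_seq X Y) \<subseteq> lp_carrier (lp_seq X Y) \<times> lp_carrier (lp_seq X Y)"
    using X Y unfolding wf_lp_def by auto
  show "\<forall>x\<in>lp_carrier (lp_seq X Y). (x, x) \<in> lp_order (lp_seq X Y)"
    using X Y unfolding wf_lp_def by auto
  show "\<forall>x y. (x, y) \<in> lp_order (lp_seq X Y) \<and> (y, x) \<in> lp_order (lp_seq X Y) \<longrightarrow> x = y"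
    using X Y unfolding wf_lp_def by auto
  show "trans (lp_order (lp_seq X Y))"
  proof (rule transI)
    fix a b c assume ab: "(a, b) \<in> lp_order (lp_seq X Y)" and bc: "(b, c) \<in> lp_order (lp_seq X Y)"
    have tX: "trans (lp_order X)" and tY: "trans (lp_order Y)" using X Y by (simp_all add: wf_lp_def)
    have sX: "lp_order X \<subseteq> lp_carrier X \<times> lp_carrier X" and sY: "lp_order Y \<subseteq> lp_carrier Y \<times> lp_carrier Y"
      using X Y by (simp_all add: wf_lp_def)
    from ab bc show "(a, c) \<in> lp_order (lp_seq X Y)"
      apply simp
      apply (elim disjE imageE exE conjE; clarsimp)
      using tX tY sX sY by (auto dest: transD)
  qed
qed

lemma seq_carrier_iff: "p \<in> lp_carrier (lp_seq X Y) \<longleftrightarrow>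
   (even p \<and> p div 2 \<in> lp_carrier X) \<or> (odd p \<and> p div 2 \<in> lp_carrier Y)"
  by (auto simp: image_iff elim: evenE oddE)

lemma par_carrier_iff: "p \<in> lp_carrier (lp_par X Y) \<longleftrightarrow>
   (even p \<and> p div 2 \<in> lp_carrier X) \<or> (odd p \<and> p div 2 \<in> lp_carrier Y)"
  by (auto simp: image_iff elim: evenE oddE)

lemma seq_order_iff: "(p, q) \<in> lp_order (lp_seq X Y) \<longleftrightarrow>
   (even p \<and> even q \<and> (p div 2, q div 2) \<in> lp_order X) \<or>
   (odd p \<and> odd q \<and> (p div 2, q div 2) \<in> lp_order Y) \<or>
   (even p \<and> odd q \<and> p div 2 \<in> lp_carrier X \<and> q div 2 \<in> lp_carrier Y)"
  apply (simp only: lp_seq_simps)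
  apply (auto simp: image_iff Bex_def elim!: evenE oddE)
  done

lemma par_order_iff: "(p, q) \<in> lp_order (lp_par X Y) \<longleftrightarrow>
   (even p \<and> even q \<and> (p div 2, q div 2) \<in> lp_order X) \<or>
   (odd p \<and> odd q \<and> (p div 2, q div 2) \<in> lp_order Y)"
  apply (simp only: lp_par_simps)
  apply (auto simp: image_iff Bex_def elim!: evenE oddE)
  done

lemma iso_intro:
  assumes "\<forall>x\<in>lp_carrier X. f x \<in> lp_carrier Y" "\<forall>y\<in>lp_carrier Y. g y \<in> lp_carrier X"
    "\<forall>x\<in>lp_carrier X. g (f x) = x" "\<forall>y\<in>lp_carrier Y. f (g y) = y"
    "\<forall>x\<in>lp_carrier X. \<forall>y\<in>lp_carrier X. (x, y) \<in> lp_order X \<longleftrightarrow> (f x, f y) \<in> lp_order Y"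
    "\<forall>x\<in>lp_carrier X. lp_label Y (f x) = lp_label X x"
  shows "lp_iso X Y"
  unfolding lp_iso_def
proof (intro exI[of _ f] conjI)
  show "bij_betw f (lp_carrier X) (lp_carrier Y)"
    using bij_betw_byWitness[of "lp_carrier X" g f "lp_carrier Y"] assms by auto
qed (use assms in auto)

lemma iso_obtain:
  assumes "lp_iso X Y"
  obtains f g where "\<forall>x\<in>lp_carrier X. f x \<in> lp_carrier Y" "\<forall>y\<in>lp_carrier Y. g y \<in> lp_carrier X"
    "\<forall>x\<in>lp_carrier X. g (f x) = x" "\<forall>y\<in>lp_carrier Y. f (g y) = y"
    "\<forall>x\<in>lp_carrier X. \<forall>y\<in>lp_carrier X. (x, y) \<in> lp_order X \<longleftrightarrow> (f x, f y) \<in> lp_order Y"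
    "\<forall>x\<in>lp_carrier X. lp_label Y (f x) = lp_label X x"
proof -
  obtain f where b: "bij_betw f (lp_carrier X) (lp_carrier Y)"
    and o: "\<forall>x\<in>lp_carrier X. \<forall>y\<in>lp_carrier X. (x, y) \<in> lp_order X \<longleftrightarrow> (f x, f y) \<in> lp_order Y"
    and l: "\<forall>x\<in>lp_carrier X. lp_label Y (f x) = lp_label X x"
    using assms unfolding lp_iso_def by blast
  let ?g = "inv_into (lp_carrier X) f"
  have "\<forall>x\<in>lp_carrier X. f x \<in> lp_carrier Y" using b by (meson bij_betwE)
  moreover have "\<forall>y\<in>lp_carrier Y. ?g y \<in> lp_carrier X" using bij_betw_inv_into[OF b] by (meson bij_betwE)
  moreover have "\<forall>x\<in>lp_carrier X. ?g (f x) = x" using b by (meson bij_betw_inv_into_left)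
  moreover have "\<forall>y\<in>lp_carrier Y. f (?g y) = y" using b by (meson bij_betw_inv_into_right)
  ultimately show ?thesis using that o l by blast
qed

lemma iso_seq_cong:
  assumes "lp_iso X X'" "lp_iso Y Y'"
  shows "lp_iso (lp_seq X Y) (lp_seq X' Y')"
proof -
  obtain f f' where f: "\<forall>x\<in>lp_carrier X. f x \<in> lp_carrier X'" "\<forall>y\<in>lp_carrier X'. f' y \<in> lp_carrier X"
    "\<forall>x\<in>lp_carrier X. f' (f x) = x" "\<forall>y\<in>lp_carrier X'. f (f' y) = y"
    "\<forall>x\<in>lp_carrier X. \<forall>y\<in>lp_carrier X. (x, y) \<in> lp_order X \<longleftrightarrow> (f x, f y) \<in> lp_order X'"
    "\<forall>x\<in>lp_carrier X. lp_label X' (f x) = lp_label X x"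
    using assms(1) by (rule iso_obtain)
  obtain h h' where h: "\<forall>x\<in>lp_carrier Y. h x \<in> lp_carrier Y'" "\<forall>y\<in>lp_carrier Y'. h' y \<in> lp_carrier Y"
    "\<forall>x\<in>lp_carrier Y. h' (h x) = x" "\<forall>y\<in>lp_carrier Y'. h (h' y) = y"
    "\<forall>x\<in>lp_carrier Y. \<forall>y\<in>lp_carrier Y. (x, y) \<in> lp_order Y \<longleftrightarrow> (h x, h y) \<in> lp_order Y'"
    "\<forall>x\<in>lp_carrier Y. lp_label Y' (h x) = lp_label Y x"
    using assms(2) by (rule iso_obtain)
  show ?thesis
    apply (rule iso_intro[where f="\<lambda>n. if even n then 2 * f (n div 2) else 2 * h (n div 2) + 1"
          and g="\<lambda>n. if even n then 2 * f' (n div 2) else 2 * h' (n div 2) + 1"])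
    using f h by (auto simp only: seq_carrier_iff seq_order_iff lp_seq_simps) auto
qed

lemma iso_par_cong:
  assumes "lp_iso X X'" "lp_iso Y Y'"
  shows "lp_iso (lp_par X Y) (lp_par X' Y')"
proof -
  obtain f f' where f: "\<forall>x\<in>lp_carrier X. f x \<in> lp_carrier X'" "\<forall>y\<in>lp_carrier X'. f' y \<in> lp_carrier X"
    "\<forall>x\<in>lp_carrier X. f' (f x) = x" "\<forall>y\<in>lp_carrier X'. f (f' y) = y"
    "\<forall>x\<in>lp_carrier X. \<forall>y\<in>lp_carrier X. (x, y) \<in> lp_order X \<longleftrightarrow> (f x, f y) \<in> lp_order X'"
    "\<forall>x\<in>lp_carrier X. lp_label X' (f x) = lp_label X x"
    using assms(1) by (rule iso_obtain)
  obtain h h' where h: "\<forall>x\<in>lp_carrier Y. h x \<in> lp_carrier Y'" "\<forall>y\<in>lp_carrier Y'. h' y \<in> lp_carrier Y"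
    "\<forall>x\<in>lp_carrier Y. h' (h x) = x" "\<forall>y\<in>lp_carrier Y'. h (h' y) = y"
    "\<forall>x\<in>lp_carrier Y. \<forall>y\<in>lp_carrier Y. (x, y) \<in> lp_order Y \<longleftrightarrow> (h x, h y) \<in> lp_order Y'"
    "\<forall>x\<in>lp_carrier Y. lp_label Y' (h x) = lp_label Y x"
    using assms(2) by (rule iso_obtain)
  show ?thesis
    apply (rule iso_intro[where f="\<lambda>n. if even n then 2 * f (n div 2) else 2 * h (n div 2) + 1"
          and g="\<lambda>n. if even n then 2 * f' (n div 2) else 2 * h' (n div 2) + 1"])
    using f h by (auto simp only: par_carrier_iff par_order_iff lp_par_simps) auto
qed



lemma iso_seq_unitl: "lp_iso X (lp_seq lp_empty X)"
  by (rule iso_intro[where f="\<lambda>n. 2 * n + 1" and g="\<lambda>n. n div 2"])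
     (auto simp: seq_carrier_iff seq_order_iff)

lemma iso_seq_unitr: "lp_iso X (lp_seq X lp_empty)"
  by (rule iso_intro[where f="\<lambda>n. 2 * n" and g="\<lambda>n. n div 2"])
     (auto simp: seq_carrier_iff seq_order_iff)

lemma iso_par_unitr: "lp_iso X (lp_par X lp_empty)"
  by (rule iso_intro[where f="\<lambda>n. 2 * n" and g="\<lambda>n. n div 2"])
     (auto simp: par_carrier_iff par_order_iff)

definition dbl :: "nat \<Rightarrow> nat" where "dbl n = 2 * n"
definition dbl1 :: "nat \<Rightarrow> nat" where "dbl1 n = 2 * n + 1"

lemma dbl_simps[simp]: "(dbl a = dbl b) = (a = b)" "(dbl1 a = dbl1 b) = (a = b)"
  "(dbl a = dbl1 b) = False" "(dbl1 a = dbl b) = False"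
  by (auto simp: dbl_def dbl1_def)

lemma seq_dbl[simp]:
  "(dbl a \<in> lp_carrier (lp_seq X Y)) = (a \<in> lp_carrier X)"
  "(dbl1 a \<in> lp_carrier (lp_seq X Y)) = (a \<in> lp_carrier Y)"
  "((dbl a, dbl b) \<in> lp_order (lp_seq X Y)) = ((a, b) \<in> lp_order X)"
  "((dbl1 a, dbl1 b) \<in> lp_order (lp_seq X Y)) = ((a, b) \<in> lp_order Y)"
  "((dbl a, dbl1 b) \<in> lp_order (lp_seq X Y)) = (a \<in> lp_carrier X \<and> b \<in> lp_carrier Y)"
  "((dbl1 a, dbl b) \<in> lp_order (lp_seq X Y)) = False"
  "lp_label (lp_seq X Y) (dbl a) = lp_label X a"
  "lp_label (lp_seq X Y) (dbl1 a) = lp_label Y a"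
  by (simp_all add: seq_carrier_iff seq_order_iff dbl_def dbl1_def del: lp_seq_simps)
     (simp_all add: lp_seq_def lp_par_def lp_label_def)

lemma seq_cases:
  assumes "x \<in> lp_carrier (lp_seq X Y)"
  obtains a where "a \<in> lp_carrier X" "x = dbl a" | b where "b \<in> lp_carrier Y" "x = dbl1 b"
  using assms by (auto simp: dbl_def dbl1_def)

definition fA :: "nat \<Rightarrow> nat" where
  "fA n = (if odd n then 2 * n + 1 else if 4 dvd n then n div 2 else n - 1)"
definition gA :: "nat \<Rightarrow> nat" where
  "gA m = (if even m then 2 * m else if m mod 4 = 1 then m + 1 else m div 2)"

lemma fA_simps[simp]: "fA (dbl (dbl a)) = dbl a" "fA (dbl (dbl1 b)) = dbl1 (dbl b)"
  "fA (dbl1 c) = dbl1 (dbl1 c)"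
  unfolding fA_def dbl_def dbl1_def by presburger+

lemma gA_simps[simp]: "gA (dbl a) = dbl (dbl a)" "gA (dbl1 (dbl b)) = dbl (dbl1 b)"
  "gA (dbl1 (dbl1 c)) = dbl1 c"
  unfolding gA_def dbl_def dbl1_def by presburger+

lemma iso_seq_assoc: "lp_iso (lp_seq (lp_seq X Y) Z) (lp_seq X (lp_seq Y Z))"
proof (rule iso_intro[where f=fA and g=gA]; intro ballI)
  fix x assume "x \<in> lp_carrier (lp_seq (lp_seq X Y) Z)"
  then show "fA x \<in> lp_carrier (lp_seq X (lp_seq Y Z))"
    by (elim seq_cases) (auto simp del: lp_seq_simps)
next
  fix x assume "x \<in> lp_carrier (lp_seq X (lp_seq Y Z))"
  then show "gA x \<in> lp_carrier (lp_seq (lp_seq X Y) Z)"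
    by (elim seq_cases) (auto simp del: lp_seq_simps)
next
  fix x assume "x \<in> lp_carrier (lp_seq (lp_seq X Y) Z)"
  then show "gA (fA x) = x"
    by (elim seq_cases) (auto simp del: lp_seq_simps)
next
  fix x assume "x \<in> lp_carrier (lp_seq X (lp_seq Y Z))"
  then show "fA (gA x) = x"
    by (elim seq_cases) (auto simp del: lp_seq_simps)
next
  fix x assume "x \<in> lp_carrier (lp_seq (lp_seq X Y) Z)"
  then show "lp_label (lp_seq X (lp_seq Y Z)) (fA x) = lp_label (lp_seq (lp_seq X Y) Z) x"
    by (elim seq_cases) (auto simp del: lp_seq_simps)
next
  fix x y assume x: "x \<in> lp_carrier (lp_seq (lp_seq X Y) Z)" and y: "y \<in> lp_carrier (lp_seq (lp_seq X Y) Z)"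
  from x y show "((x, y) \<in> lp_order (lp_seq (lp_seq X Y) Z)) = ((fA x, fA y) \<in> lp_order (lp_seq X (lp_seq Y Z)))"
    by (elim seq_cases) (auto simp del: lp_seq_simps)
qed



lemma pom_Rep: "wf_lp X \<Longrightarrow> Rep_pomset (pom X) = {Y. wf_lp Y \<and> lp_iso X Y}"
  unfolding pom_def by (rule Abs_pomset_inverse) blast

lemma pom_eqI: assumes "lp_iso X Y" shows "pom X = pom Y"
proof -
  have "{Z. wf_lp Z \<and> lp_iso X Z} = {Z. wf_lp Z \<and> lp_iso Y Z}"
    using assms iso_sym iso_trans by blast
  then show ?thesis unfolding pom_def by simp
qed

lemma rep_wf: "wf_lp (pom_rep P)" and rep_pom: "pom (pom_rep P) = P"
proof -
  obtain X where X: "wf_lp X" "Rep_pomset P = {Y. wf_lp Y \<and> lp_iso X Y}"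
    using Rep_pomset[of P] by blast
  have "X \<in> Rep_pomset P" using X iso_refl by blast
  then have r: "pom_rep P \<in> Rep_pomset P" unfolding pom_rep_def by (rule someI)
  then show "wf_lp (pom_rep P)" using X by simp
  have "lp_iso X (pom_rep P)" using r X by simp
  then have "pom (pom_rep P) = pom X" using pom_eqI iso_sym by metis
  also have "pom X = Abs_pomset (Rep_pomset P)" unfolding pom_def X(2) ..
  also have "\<dots> = P" by (rule Rep_pomset_inverse)
  finally show "pom (pom_rep P) = P" .
qed

lemma rep_pom_iso: assumes "wf_lp X" shows "lp_iso (pom_rep (pom X)) X"
proof -
  have "X \<in> Rep_pomset (pom X)" using pom_Rep[OF assms] iso_refl assms by blast
  then have "pom_rep (pom X) \<in> Rep_pomset (pom X)" unfolding pom_rep_def by (rule someI)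
  then show ?thesis using pom_Rep[OF assms] iso_sym by blast
qed




lemma pom_seq_onel: "pom_seq pom_one W = W"
proof -
  have "lp_iso (lp_seq (pom_rep (pom lp_empty)) (pom_rep W)) (lp_seq lp_empty (pom_rep W))"
    by (rule iso_seq_cong[OF rep_pom_iso[OF wf_empty] iso_refl])
  moreover have "lp_iso (lp_seq lp_empty (pom_rep W)) (pom_rep W)" by (rule iso_sym[OF iso_seq_unitl])
  ultimately have "pom (lp_seq (pom_rep (pom lp_empty)) (pom_rep W)) = pom (pom_rep W)"
    by (metis iso_trans pom_eqI)
  then show ?thesis by (simp add: pom_seq_def pom_one_def rep_pom)
qed

lemma pom_seq_oner: "pom_seq W pom_one = W"
proof -
  have "lp_iso (lp_seq (pom_rep W) (pom_rep (pom lp_empty))) (lp_seq (pom_rep W) lp_empty)"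
    by (rule iso_seq_cong[OF iso_refl rep_pom_iso[OF wf_empty]])
  moreover have "lp_iso (lp_seq (pom_rep W) lp_empty) (pom_rep W)" by (rule iso_sym[OF iso_seq_unitr])
  ultimately have "pom (lp_seq (pom_rep W) (pom_rep (pom lp_empty))) = pom (pom_rep W)"
    by (metis iso_trans pom_eqI)
  then show ?thesis by (simp add: pom_seq_def pom_one_def rep_pom)
qed

lemma pom_par_oner: "pom_par W pom_one = W"
proof -
  have "lp_iso (lp_par (pom_rep W) (pom_rep (pom lp_empty))) (lp_par (pom_rep W) lp_empty)"
    by (rule iso_par_cong[OF iso_refl rep_pom_iso[OF wf_empty]])
  moreover have "lp_iso (lp_par (pom_rep W) lp_empty) (pom_rep W)" by (rule iso_sym[OF iso_par_unitr])
  ultimately have "pom (lp_par (pom_rep W) (pom_rep (pom lp_empty))) = pom (pom_rep W)"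
    by (metis iso_trans pom_eqI)
  then show ?thesis by (simp add: pom_par_def pom_one_def rep_pom)
qed

lemma pom_seq_assoc: "pom_seq (pom_seq U V) W = pom_seq U (pom_seq V W)"
proof -
  let ?u = "pom_rep U" and ?v = "pom_rep V" and ?w = "pom_rep W"
  have "lp_iso (lp_seq (pom_rep (pom (lp_seq ?u ?v))) ?w) (lp_seq (lp_seq ?u ?v) ?w)"
    by (rule iso_seq_cong[OF rep_pom_iso[OF wf_seq[OF rep_wf rep_wf]] iso_refl])
  moreover have "lp_iso (lp_seq (lp_seq ?u ?v) ?w) (lp_seq ?u (lp_seq ?v ?w))" by (rule iso_seq_assoc)
  moreover have "lp_iso (lp_seq ?u (lp_seq ?v ?w)) (lp_seq ?u (pom_rep (pom (lp_seq ?v ?w))))"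
    by (rule iso_seq_cong[OF iso_refl iso_sym[OF rep_pom_iso[OF wf_seq[OF rep_wf rep_wf]]]])
  ultimately have "pom (lp_seq (pom_rep (pom (lp_seq ?u ?v))) ?w) = pom (lp_seq ?u (pom_rep (pom (lp_seq ?v ?w))))"
    by (metis iso_trans pom_eqI)
  then show ?thesis by (simp add: pom_seq_def)
qed




instance spr :: (countable) countable by countable_datatype

definition cd :: "'a::countable spr \<Rightarrow> nat" where "cd e = to_nat e + 2"
definition dc :: "nat \<Rightarrow> 'a::countable spr" where "dc n = from_nat (n - 2)"

lemma cd_simps[simp]: "dc (cd e) = e" "cd e \<noteq> 0" "cd e \<noteq> Suc 0" "(cd e = cd f) = (e = f)"
  "0 \<noteq> cd e" "Suc 0 \<noteq> cd e" "\<not> cd e < 2" "2 \<le> cd e"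
  by (auto simp: cd_def dc_def)

primrec subs :: "'a spr \<Rightarrow> 'a spr set" where
  "subs Zero = {Zero}"
| "subs One = {One}"
| "subs (Atom a) = {Atom a}"
| "subs (Plus e f) = insert (Plus e f) (subs e \<union> subs f)"
| "subs (Seq e f) = insert (Seq e f) (subs e \<union> subs f)"
| "subs (Par e f) = insert (Par e f) (subs e \<union> subs f)"
| "subs (Star e) = insert (Star e) (subs e)"
| "subs (Dagger e) = insert (Dagger e) (subs e)"

lemma subs_finite: "finite (subs e)" by (induction e) auto
lemma subs_self: "e \<in> subs e" by (cases e) auto
lemma subs_trans: "f \<in> subs e \<Longrightarrow> g \<in> subs f \<Longrightarrow> g \<in> subs e"
  by (induction e) auto
lemma subs_sub: "x \<in> subs e \<Longrightarrow> subs x \<subseteq> subs e"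
  by (induction e) auto

lemma subs_child:
  "Plus e f \<in> subs g \<Longrightarrow> e \<in> subs g \<and> f \<in> subs g"
  "Seq e f \<in> subs g \<Longrightarrow> e \<in> subs g \<and> f \<in> subs g"
  "Par e f \<in> subs g \<Longrightarrow> e \<in> subs g \<and> f \<in> subs g"
  "Star e \<in> subs g \<Longrightarrow> e \<in> subs g"
  "Dagger e \<in> subs g \<Longrightarrow> e \<in> subs g"
  using subs_sub[of "Plus e f" g] subs_sub[of "Seq e f" g] subs_sub[of "Par e f" g]
    subs_sub[of "Star e" g] subs_sub[of "Dagger e" g] subs_self[of e] subs_self[of f] by auto

definition delt :: "nat \<Rightarrow> 'a::countable \<Rightarrow> nat" where
  "delt n a = (if n < 2 then 0 else (case dc n of Atom b \<Rightarrow> if a = b then 1 else 0 | _ \<Rightarrow> 0))"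

definition gam :: "'a::countable itself \<Rightarrow> nat \<Rightarrow> nat \<Rightarrow> nat \<Rightarrow> nat" where
  "gam T n r s = (if n < 2 then 0 else (case (dc n :: 'a spr) of
     Plus e f \<Rightarrow> if (r = cd e \<or> r = cd f) \<and> s = 1 then 1 else 0
   | Seq e f \<Rightarrow> if r = cd e \<and> s = 1 then cd f else 0
   | Par e f \<Rightarrow> if r = cd e \<and> s = cd f then 1 else 0
   | Star e \<Rightarrow> if r = cd e \<and> s = 1 then n else 0
   | Dagger e \<Rightarrow> if r = cd e \<and> s = n then 1 else 0
   | _ \<Rightarrow> 0))"

fun isfin :: "'a spr \<Rightarrow> bool" where
  "isfin One = True" | "isfin (Star e) = True" | "isfin (Dagger e) = True" | "isfin _ = False"

definition sts :: "'a::countable spr \<Rightarrow> nat set" where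
  "sts e0 = {0, 1} \<union> cd ` subs e0"

definition aut :: "'a::countable spr \<Rightarrow> (nat, 'a) pa" where
  "aut e0 = \<lparr>states = sts e0, delta = delt, gamma = gam TYPE('a),
     final = {n \<in> sts e0. n = 1 \<or> (2 \<le> n \<and> isfin (dc n :: 'a spr))}, bot = 0, top = 1\<rparr>"

lemma aut_simps[simp]: "states (aut e0) = sts e0" "delta (aut e0) = delt" "gamma (aut e0) = gam TYPE('a)"
  "final (aut e0) = {n \<in> sts e0. n = 1 \<or> (2 \<le> n \<and> isfin (dc n :: 'a spr))}" "bot (aut e0) = 0" "top (aut e0) = 1"
  for e0 :: "'a::countable spr"
  by (simp_all add: aut_def)

lemma delt_cases: "delt n a = 0 \<or> delt n a = 1" by (auto simp: delt_def split: spr.split)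

lemma gam_cd[simp]:
  "gam TYPE('a) (cd (Plus e f)) r s = (if (r = cd e \<or> r = cd f) \<and> s = 1 then 1 else 0)"
  "gam TYPE('a) (cd (Seq e f)) r s = (if r = cd e \<and> s = 1 then cd f else 0)"
  "gam TYPE('a) (cd (Par e f)) r s = (if r = cd e \<and> s = cd f then 1 else 0)"
  "gam TYPE('a) (cd (Star e)) r s = (if r = cd e \<and> s = 1 then cd (Star e) else 0)"
  "gam TYPE('a) (cd (Dagger e)) r s = (if r = cd e \<and> s = cd (Dagger e) then 1 else 0)"
  "gam TYPE('a) (cd (Zero :: 'a spr)) r s = 0" "gam TYPE('a) (cd (One :: 'a spr)) r s = 0"
  "gam TYPE('a) (cd (Atom a :: 'a spr)) r s = 0"
  "gam TYPE('a) 0 r s = 0" "gam TYPE('a) (Suc 0) r s = 0"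
  for e f :: "'a::countable spr"
  by (simp_all add: gam_def)

lemma delt_cd[simp]:
  "delt (cd (Atom b :: 'a spr)) a = (if a = b then 1 else 0)"
  "delt 0 a = 0" "delt (Suc 0) a = 0"
  for a b :: "'a::countable"
  by (simp_all add: delt_def)

lemma delt_cd0[simp]: "\<forall>b. e \<noteq> Atom b \<Longrightarrow> delt (cd e) a = 0"
  for e :: "'a::countable spr" and a :: 'a
  by (cases e) (auto simp: delt_def)

lemma sts_cases:
  assumes "n \<in> sts e0"
  obtains "n = 0" | "n = 1" | e where "e \<in> subs e0" "n = cd e"
  using assms unfolding sts_def by auto

lemma isPA: "is_pa (aut e0)"
  unfolding is_pa_def
proof (intro conjI ballI allI)
  fix q r s assume q: "q \<in> states (aut e0)" and r: "r \<in> states (aut e0)" and s: "s \<in> states (aut e0)"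
  from q have "q \<in> sts e0" by simp
  then show "gamma (aut e0) q r s \<in> states (aut e0)"
  proof (cases rule: sts_cases)
    case (3 e)
    then show ?thesis
      by (cases e) (auto simp: sts_def dest: subs_child)
  qed (auto simp: sts_def)
next
  fix q a assume q: "q \<in> states (aut e0)"
  show "delta (aut e0) q a \<in> states (aut e0)" using delt_cases[of q a] by (auto simp: sts_def)
qed (auto simp: sts_def)


definition mu :: "'a::countable itself \<Rightarrow> nat \<Rightarrow> nat" where
  "mu T n = (if n < 2 then 0 else size (dc n :: 'a spr) + 1)"

lemma mu_simps[simp]: "mu TYPE('a) (cd e) = size e + 1" "mu TYPE('a) 0 = 0" "mu TYPE('a) (Suc 0) = 0"
  for e :: "'a::countable spr"
  by (simp_all add: mu_def)

lemma sts_cd: "cd e \<in> sts e0 \<Longrightarrow> e \<in> subs e0"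
  by (auto simp: sts_def)

lemma cd_sts: "e \<in> subs e0 \<Longrightarrow> cd e \<in> sts e0"
  by (auto simp: sts_def)

lemma gam_mu: fixes e0 :: "'a::countable spr"
  assumes "q \<in> sts e0" shows "mu TYPE('a) (gam TYPE('a) q r s) \<le> mu TYPE('a) q"
  using assms
proof (cases rule: sts_cases)
  case (3 e) then show ?thesis by (cases e) auto
qed auto

lemma gam_nz: fixes e0 :: "'a::countable spr"
  assumes "q \<in> sts e0" "gam TYPE('a) q r s \<noteq> 0" shows
   "mu TYPE('a) r < mu TYPE('a) q \<and> (mu TYPE('a) s < mu TYPE('a) q \<or>
     (\<exists>e::'a spr. q = cd (Dagger e) \<and> s = q \<and> r = cd e \<and> gam TYPE('a) q r s = 1))"
  using assms(1)
proof (cases rule: sts_cases)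
  case (3 e) then show ?thesis using assms(2) by (cases e) (auto split: if_splits)
qed (use assms in auto)

lemma le_mu: "pa_le (aut e0) x y \<Longrightarrow> mu TYPE('a) x \<le> mu TYPE('a) y"
  for e0 :: "'a::countable spr"
proof (induction rule: pa_le.induct)
  case (le_gamma_l q r s) then show ?case using gam_nz[of q e0 r s] by auto
next
  case (le_gamma_r q r s) then show ?case using gam_nz[of q e0 r s] by auto
next
  case (le_delta q a) then show ?case using delt_cases[of q a] by auto
next
  case (le_gamma q r s) then show ?case using gam_mu[of q e0 r s] by auto
qed auto

lemma le_states: "pa_le (aut e0) x y \<Longrightarrow> x \<in> sts e0"
  for e0 :: "'a::countable spr"
proof (induction rule: pa_le.induct)
  case (le_delta q a) then show ?case using isPA[of e0] unfolding is_pa_def by auto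
next
  case (le_gamma q r s) then show ?case using isPA[of e0] unfolding is_pa_def by auto
qed auto

lemma fin_supp: "finitely_supported (aut e0)"
  unfolding finitely_supported_def
proof
  fix q assume q: "q \<in> states (aut e0)"
  have "support (aut e0) q \<subseteq> sts e0"
    unfolding support_def using q le_states[of e0] by (intro Inter_lower) auto
  moreover have "finite (sts e0)" by (simp add: sts_def subs_finite)
  ultimately show "finite (support (aut e0) q)" by (rule finite_subset)
qed

lemma wn: "well_nested (aut e0)" for e0 :: "'a::countable spr"
  unfolding well_nested_def
proof
  fix q assume q: "q \<in> states (aut e0)"
  show "sequential_state (aut e0) q \<or> recursive_state (aut e0) q"
  proof (cases "\<exists>e::'a spr. q = cd (Dagger e)")
    case True
    then obtain e :: "'a spr" where e: "q = cd (Dagger e)" by blast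
    have sub: "Dagger e \<in> subs e0" using q e sts_cd by auto
    then have ce: "cd e \<in> sts e0" using subs_child cd_sts by blast
    have qs: "q \<in> sts e0" using q by simp
    have le1: "pa_le (aut e0) (cd e) q"
      using pa_le.le_gamma_l[of q "aut e0" "cd e" q] qs ce e by simp
    have lt1: "pa_lt (aut e0) (cd e) q"
      unfolding pa_lt_def using le1 le_mu[of e0 q "cd e"] e by auto
    have "\<not> sequential_state (aut e0) q"
      unfolding sequential_state_def pa_lt_def using qs ce e by auto
    moreover have "q \<in> final (aut e0)" using qs e by simp
    ultimately have "recursive_state (aut e0) q"
      unfolding recursive_state_def using e lt1 by auto
    then show ?thesis ..
  next
    case False
    have "sequential_state (aut e0) q"
      unfolding sequential_state_def
    proof (intro ballI impI)
      fix r s assume r: "r \<in> states (aut e0)" and s: "s \<in> states (aut e0)"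
        and nz: "gamma (aut e0) q r s \<noteq> bot (aut e0)"
      have qs: "q \<in> sts e0" using q by simp
      from gam_nz[of q e0 r s] qs nz False
      have m: "mu TYPE('a) r < mu TYPE('a) q" "mu TYPE('a) s < mu TYPE('a) q" by auto
      have "pa_le (aut e0) r q" using pa_le.le_gamma_l[of q "aut e0" r s] q r s nz by simp
      moreover have "pa_le (aut e0) s q" using pa_le.le_gamma_r[of q "aut e0" r s] q r s nz by simp
      ultimately show "pa_lt (aut e0) r q \<and> pa_lt (aut e0) s q"
        unfolding pa_lt_def using m le_mu[of e0 q r] le_mu[of e0 q s] by auto
    qed
    then show ?thesis ..
  qed
qed


definition Mx :: "'a::countable itself \<Rightarrow> nat \<Rightarrow> 'a pomset set" where
  "Mx T n = (if n = 0 then {} else if n = 1 then {pom_one} else sem (dc n :: 'a spr))"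

lemma Mx_simps[simp]: "Mx TYPE('a) (cd e) = sem e" "Mx TYPE('a) 0 = {}" "Mx TYPE('a) (Suc 0) = {pom_one}"
  for e :: "'a::countable spr"
  by (simp_all add: Mx_def)

lemma star_one: "pom_one \<in> lang_star L"
  unfolding lang_star_def by (auto intro: exI[of _ 0])

lemma star_step: "U \<in> L \<Longrightarrow> W \<in> lang_star L \<Longrightarrow> pom_seq U W \<in> lang_star L"
proof -
  assume U: "U \<in> L" and "W \<in> lang_star L"
  then obtain n where "W \<in> lang_seq_pow L n" unfolding lang_star_def by blast
  then have "pom_seq U W \<in> lang_seq_pow L (Suc n)" using U by (auto simp: lang_seq_def)
  then show ?thesis unfolding lang_star_def by blast
qed

lemma dagger_one: "pom_one \<in> lang_dagger L"
  unfolding lang_dagger_def by (auto intro: exI[of _ 0])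

lemma dagger_step: "U \<in> L \<Longrightarrow> W \<in> lang_dagger L \<Longrightarrow> pom_par U W \<in> lang_dagger L"
proof -
  assume U: "U \<in> L" and "W \<in> lang_dagger L"
  then obtain n where "W \<in> lang_par_pow L n" unfolding lang_dagger_def by blast
  then have "pom_par U W \<in> lang_par_pow L (Suc n)" using U by (auto simp: lang_par_def)
  then show ?thesis unfolding lang_dagger_def by blast
qed

lemma isfin_one: "isfin e \<Longrightarrow> pom_one \<in> sem e"
  by (cases e) (auto simp: star_one dagger_one)

lemma fin_one: fixes e0 :: "'a::countable spr"
  assumes "q \<in> final (aut e0)" shows "pom_one \<in> Mx TYPE('a) q"
  using assms isfin_one by (auto simp: Mx_def)

lemma delt_one: "delt q a = 1 \<Longrightarrow> 2 \<le> q \<and> dc q = Atom a"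
  by (auto simp: delt_def split: if_splits spr.splits)

lemma sound: fixes e0 :: "'a::countable spr"
  assumes "trace (aut e0) q U q'" shows "W \<in> Mx TYPE('a) q' \<Longrightarrow> pom_seq U W \<in> Mx TYPE('a) q"
  using assms
proof (induction arbitrary: W rule: trace.induct)
  case (tr_one q) then show ?case by (simp add: pom_seq_onel)
next
  case (tr_atom q a)
  then have d: "delt q a = 1" using delt_cases[of q a] by auto
  then have "2 \<le> q" "dc q = Atom a" using delt_one by auto
  then show ?case using tr_atom d by (simp add: Mx_def pom_seq_oner)
next
  case (tr_seq q U q'' V q') then show ?case by (simp add: pom_seq_assoc)
next
  case (tr_par q r U r' s V s')
  have U: "U \<in> Mx TYPE('a) r" using tr_par.IH(1)[OF fin_one[OF tr_par.hyps(3)]] by (simp add: pom_seq_oner)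
  have V: "V \<in> Mx TYPE('a) s" using tr_par.IH(2)[OF fin_one[OF tr_par.hyps(5)]] by (simp add: pom_seq_oner)
  have W: "W \<in> Mx TYPE('a) (gam TYPE('a) q r s)" using tr_par.prems by simp
  then have nz: "gam TYPE('a) q r s \<noteq> 0" by (cases "gam TYPE('a) q r s = 0") auto
  have "q \<in> sts e0" using tr_par.hyps(1) by simp
  then show ?case
  proof (cases rule: sts_cases)
    case (3 e)
    show ?thesis
    proof (cases e)
      case (Plus e1 e2) then show ?thesis using 3 U V W nz
        by (auto split: if_splits simp: pom_seq_oner pom_par_oner)
    next
      case (Seq e1 e2) then show ?thesis using 3 U V W nz
        by (auto split: if_splits simp: pom_seq_oner pom_par_oner lang_seq_def)
    next
      case (Par e1 e2) then show ?thesis using 3 U V W nz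
        by (auto split: if_splits simp: pom_seq_oner pom_par_oner lang_par_def)
    next
      case (Star e1) then show ?thesis using 3 U V W nz
        by (auto split: if_splits simp: pom_seq_oner pom_par_oner star_step)
    next
      case (Dagger e1) then show ?thesis using 3 U V W nz
        by (auto split: if_splits simp: pom_seq_oner pom_par_oner dagger_step)
    qed (use 3 nz in auto)
  qed (use nz in auto)
qed

lemma complete: fixes e0 :: "'a::countable spr"
  assumes "e \<in> subs e0" "U \<in> sem e"
  shows "\<exists>q'\<in>final (aut e0). trace (aut e0) (cd e) U q'"
  using assms
proof (induction e arbitrary: U)
  case Zero then show ?case by simp
next
  case One
  then have "cd (One :: 'a spr) \<in> sts e0" using cd_sts by blast
  then show ?case using One trace.tr_one[of "cd (One :: 'a spr)" "aut e0"] by auto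
next
  case (Atom a)
  then have "cd (Atom a) \<in> sts e0" using cd_sts by blast
  then show ?case using Atom trace.tr_atom[of "cd (Atom a)" "aut e0" a] by (auto simp: sts_def)
next
  case (Plus e1 e2)
  have st: "cd (Plus e1 e2) \<in> sts e0" using Plus cd_sts by blast
  have one: "trace (aut e0) 1 pom_one 1" using trace.tr_one[of 1 "aut e0"] by (simp add: sts_def)
  have f1: "(1::nat) \<in> final (aut e0)" by (simp add: sts_def)
  from Plus.prems(2) have "U \<in> sem e1 \<or> U \<in> sem e2" by simp
  then show ?case
  proof
    assume "U \<in> sem e1"
    then obtain q' where "q' \<in> final (aut e0)" "trace (aut e0) (cd e1) U q'"
      using Plus subs_child by blast
    then have "trace (aut e0) (cd (Plus e1 e2)) (pom_par U pom_one) 1"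
      using trace.tr_par[of "cd (Plus e1 e2)" "aut e0" "cd e1" U q' 1 pom_one 1] st one f1 by simp
    then show ?thesis using f1 by (auto simp: pom_par_oner)
  next
    assume "U \<in> sem e2"
    then obtain q' where "q' \<in> final (aut e0)" "trace (aut e0) (cd e2) U q'"
      using Plus subs_child by blast
    then have "trace (aut e0) (cd (Plus e1 e2)) (pom_par U pom_one) 1"
      using trace.tr_par[of "cd (Plus e1 e2)" "aut e0" "cd e2" U q' 1 pom_one 1] st one f1 by simp
    then show ?thesis using f1 by (auto simp: pom_par_oner)
  qed
next
  case (Seq e1 e2)
  have st: "cd (Seq e1 e2) \<in> sts e0" using Seq cd_sts by blast
  have one: "trace (aut e0) 1 pom_one 1" using trace.tr_one[of 1 "aut e0"] by (simp add: sts_def)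
  have f1: "(1::nat) \<in> final (aut e0)" by (simp add: sts_def)
  from Seq.prems(2) obtain U1 V1 where U: "U = pom_seq U1 V1" "U1 \<in> sem e1" "V1 \<in> sem e2"
    by (auto simp: lang_seq_def)
  obtain q1 where q1: "q1 \<in> final (aut e0)" "trace (aut e0) (cd e1) U1 q1"
    using Seq U subs_child by blast
  obtain q2 where q2: "q2 \<in> final (aut e0)" "trace (aut e0) (cd e2) V1 q2"
    using Seq U subs_child by blast
  have "trace (aut e0) (cd (Seq e1 e2)) (pom_par U1 pom_one) (cd e2)"
    using trace.tr_par[of "cd (Seq e1 e2)" "aut e0" "cd e1" U1 q1 1 pom_one 1] st one f1 q1 by simp
  then have "trace (aut e0) (cd (Seq e1 e2)) (pom_seq (pom_par U1 pom_one) V1) q2"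
    by (rule trace.tr_seq[OF _ q2(2)])
  then show ?case using q2 U by (auto simp: pom_par_oner)
next
  case (Par e1 e2)
  have st: "cd (Par e1 e2) \<in> sts e0" using Par cd_sts by blast
  have f1: "(1::nat) \<in> final (aut e0)" by (simp add: sts_def)
  from Par.prems(2) obtain U1 V1 where U: "U = pom_par U1 V1" "U1 \<in> sem e1" "V1 \<in> sem e2"
    by (auto simp: lang_par_def)
  obtain q1 where q1: "q1 \<in> final (aut e0)" "trace (aut e0) (cd e1) U1 q1"
    using Par U subs_child by blast
  obtain q2 where q2: "q2 \<in> final (aut e0)" "trace (aut e0) (cd e2) V1 q2"
    using Par U subs_child by blast
  have "trace (aut e0) (cd (Par e1 e2)) (pom_par U1 V1) 1"
    using trace.tr_par[of "cd (Par e1 e2)" "aut e0" "cd e1" U1 q1 "cd e2" V1 q2] st q1 q2 by simp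
  then show ?case using f1 U by auto
next
  case (Star e1)
  have st: "cd (Star e1) \<in> sts e0" using Star cd_sts by blast
  have one: "trace (aut e0) 1 pom_one 1" using trace.tr_one[of 1 "aut e0"] by (simp add: sts_def)
  have f1: "(1::nat) \<in> final (aut e0)" by (simp add: sts_def)
  have fs: "cd (Star e1) \<in> final (aut e0)" using st by simp
  have sub: "e1 \<in> subs e0" using Star subs_child by blast
  from Star.prems(2) obtain n where "U \<in> lang_seq_pow (sem e1) n" by (auto simp: lang_star_def)
  then show ?case
  proof (induction n arbitrary: U)
    case 0 then show ?case using fs st trace.tr_one[of "cd (Star e1)" "aut e0"] by auto
  next
    case (Suc n)
    then obtain U1 W where U: "U = pom_seq U1 W" "U1 \<in> sem e1" "W \<in> lang_seq_pow (sem e1) n"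
      by (auto simp: lang_seq_def)
    obtain q1 where q1: "q1 \<in> final (aut e0)" "trace (aut e0) (cd e1) U1 q1"
      using Star.IH sub U by blast
    obtain q2 where q2: "q2 \<in> final (aut e0)" "trace (aut e0) (cd (Star e1)) W q2"
      using Suc.IH U by blast
    have "trace (aut e0) (cd (Star e1)) (pom_par U1 pom_one) (cd (Star e1))"
      using trace.tr_par[of "cd (Star e1)" "aut e0" "cd e1" U1 q1 1 pom_one 1] st one f1 q1 by simp
    then have "trace (aut e0) (cd (Star e1)) (pom_seq (pom_par U1 pom_one) W) q2"
      by (rule trace.tr_seq[OF _ q2(2)])
    then show ?case using q2 U by (auto simp: pom_par_oner)
  qed
next
  case (Dagger e1)
  have st: "cd (Dagger e1) \<in> sts e0" using Dagger cd_sts by blast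
  have f1: "(1::nat) \<in> final (aut e0)" by (simp add: sts_def)
  have fs: "cd (Dagger e1) \<in> final (aut e0)" using st by simp
  have sub: "e1 \<in> subs e0" using Dagger subs_child by blast
  from Dagger.prems(2) obtain n where "U \<in> lang_par_pow (sem e1) n" by (auto simp: lang_dagger_def)
  then show ?case
  proof (induction n arbitrary: U)
    case 0 then show ?case using fs st trace.tr_one[of "cd (Dagger e1)" "aut e0"] by auto
  next
    case (Suc n)
    then obtain U1 W where U: "U = pom_par U1 W" "U1 \<in> sem e1" "W \<in> lang_par_pow (sem e1) n"
      by (auto simp: lang_par_def)
    obtain q1 where q1: "q1 \<in> final (aut e0)" "trace (aut e0) (cd e1) U1 q1"
      using Dagger.IH sub U by blast
    obtain q2 where q2: "q2 \<in> final (aut e0)" "trace (aut e0) (cd (Dagger e1)) W q2"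
      using Suc.IH U by blast
    have "trace (aut e0) (cd (Dagger e1)) (pom_par U1 W) 1"
      using trace.tr_par[of "cd (Dagger e1)" "aut e0" "cd e1" U1 q1 "cd (Dagger e1)" W q2] st q1 q2 by simp
    then show ?case using U f1 by auto
  qed
qed

lemma lang_aut: fixes e :: "'a::countable spr"
  shows "lang (aut e) (cd e) = sem e"
proof
  show "lang (aut e) (cd e) \<subseteq> sem e"
  proof
    fix U assume "U \<in> lang (aut e) (cd e)"
    then obtain q' where q': "q' \<in> final (aut e)" "trace (aut e) (cd e) U q'" unfolding lang_def by blast
    have "pom_seq U pom_one \<in> Mx TYPE('a) (cd e)" by (rule sound[OF q'(2) fin_one[OF q'(1)]])
    then show "U \<in> sem e" by (simp add: pom_seq_oner)
  qed
  show "sem e \<subseteq> lang (aut e) (cd e)"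
    using complete[OF subs_self] unfolding lang_def by blast
qed

theorem mainTheorem2:
  fixes e :: "'a::finite spr"
  shows "\<exists>A :: (nat, 'a) pa. is_pa A \<and> well_nested A \<and> finitely_supported A
           \<and> (\<exists>q\<^sub>e\<in>states A. lang A q\<^sub>e = sem e)"
proof (intro exI[of _ "aut e"] conjI bexI[of _ "cd e"])
  show "cd e \<in> states (aut e)" by (simp add: cd_sts subs_self)
qed (simp_all add: isPA wn fin_supp lang_aut)


end
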